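(* Let $P,D$ be positive integers with $P\mid D$ and $\bm{W}\in\mathbb{R}^{P\times P\times P}$. For $\bm{h},\bm{r},\bm{t}\in\mathbb{R}^D$, viewed as matrices in $\mathbb{R}^{(D/P)\times P}$ with columns $\bm{h}_{:l},\bm{r}_{:m},\bm{t}_{:n}\in\mathbb{R}^{D/P}$, define $f(\bm{h},\bm{r},\bm{t})=\sum_{l,m,n=1}^{P}\bm{W}_{lmn}\langle\bm{h}_{:l},\bm{r}_{:m},\bm{t}_{:n}\rangle$, where $\langle\bm{a},\bm{b},\bm{c}\rangle=\sum_{d}\bm{a}_d\bm{b}_d\bm{c}_d$. Let $\bm{S}\in\mathbb{R}^{P^2\times P^2}$ be the permutation matrix with $\bm{S}_{(i-1)P+j,(j-1)P+i}=1$ for $i,j=1,\dots,P$ and all other entries $0$. Then: (a) the model learns symmetry rules, i.e. $\exists\bm{r}\in\mathbb{R}^D,\bm{r}\neq0$ such that $\forall\bm{h},\bm{t}\in\mathbb{R}^D$, $f(\bm{h},\bm{r},\bm{t})=f(\bm{t},\bm{r},\bm{h})$, if and only if $\operatorname{rank}(\bm{W}_{(2)}^T-\bm{S}\bm{W}_{(2)}^T)<P$; (b) the model learns antisymmetry rules, i.e. $\exists\bm{r}\in\mathbb{R}^D,\bm{r}\neq0$ such that $\forall\bm{h},\bm{t}$, $f(\bm{h},\bm{r},\bm{t})=-f(\bm{t},\bm{r},\bm{h})$, if and only if $\operatorname{rank}(\bm{W}_{(2)}^T+\bm{S}\bm{W}_{(2)}^T)<P$; (c) the model learns inverse rules, i.e.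 $\forall\bm{r}_1\in\mathbb{R}^D\ \exists\bm{r}_2\in\mathbb{R}^D\ \forall\bm{h},\bm{t}\in\mathbb{R}^D$, $f(\bm{h},\bm{r}_1,\bm{t})=f(\bm{t},\bm{r}_2,\bm{h})$, if and only if $\operatorname{rank}(\bm{W}_{(2)}^T)=\operatorname{rank}([\bm{W}_{(2)}^T,\bm{S}\bm{W}_{(2)}^T])$.
   Context: $\bm{W}_{(2)}\in\mathbb{R}^{P\times P^2}$ is the mode-2 unfolding of $\bm{W}$: its entry in row $m$ and column $l+(n-1)P$ is $\bm{W}_{lmn}$. $[\bm{A},\bm{B}]$ denotes horizontal concatenation of matrices. *)

theory Defs
  imports Main "Jordan_Normal_Form.DL_Rank"
begin

text \<open>All indices are 0-based. A vector in R^D is a function nat => real of which only the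
entries 0..D-1 matter. Viewing h in R^D as a (D/P) x P matrix (column-major), the l-th column
has entries h (l * (D div P) + d) for d < D div P.\<close>

definition col :: "nat \<Rightarrow> nat \<Rightarrow> (nat \<Rightarrow> real) \<Rightarrow> nat \<Rightarrow> nat \<Rightarrow> real" where
  "col P D h l d = h (l * (D div P) + d)"

definition tri :: "nat \<Rightarrow> (nat \<Rightarrow> real) \<Rightarrow> (nat \<Rightarrow> real) \<Rightarrow> (nat \<Rightarrow> real) \<Rightarrow> real" where
  "tri K a b c = (\<Sum>d<K. a d * b d * c d)"

definition score :: "nat \<Rightarrow> nat \<Rightarrow> (nat \<Rightarrow> nat \<Rightarrow> nat \<Rightarrow> real)
    \<Rightarrow> (nat \<Rightarrow> real) \<Rightarrow> (nat \<Rightarrow> real) \<Rightarrow> (nat \<Rightarrow> real) \<Rightarrow> real" where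
  "score P D W h r t = (\<Sum>l<P. \<Sum>m<P. \<Sum>n<P.
      W l m n * tri (D div P) (col P D h l) (col P D r m) (col P D t n))"

text \<open>Transpose of the mode-2 unfolding W_(2): W_(2) has entry W l m n in row m, column
l + n*P (0-based), so its transpose is the (P^2) x P matrix with entry (l + n*P, m) = W l m n.\<close>
definition W2T :: "nat \<Rightarrow> (nat \<Rightarrow> nat \<Rightarrow> nat \<Rightarrow> real) \<Rightarrow> real mat" where
  "W2T P W = mat (P * P) P (\<lambda>(i, m). W (i mod P) m (i div P))"

definition Sperm :: "nat \<Rightarrow> real mat" where
  "Sperm P = mat (P * P) (P * P)
     (\<lambda>(a, b). if (\<exists>i<P. \<exists>j<P. a = i * P + j \<and> b = j * P + i) then 1 else 0)"

definition hcat :: "'a mat \<Rightarrow> 'a mat \<Rightarrow> 'a mat" where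
  "hcat A B = mat (dim_row A) (dim_col A + dim_col B)
     (\<lambda>(i, j). if j < dim_col A then A $$ (i, j) else B $$ (i, j - dim_col A))"

definition mrank :: "real mat \<Rightarrow> nat" where
  "mrank A = vec_space.rank (dim_row A) A"

end

theory Submission
  imports Defs
begin


lemma mult_unit_vec_col:
  fixes A :: "'a::semiring_1 mat"
  assumes A: "A \<in> carrier_mat n nc" and i: "i < nc"
  shows "A *\<^sub>v unit_vec nc i = Matrix.col A i"
  using A i by (intro eq_vecI) (auto simp: row_def Matrix.col_def)

lemma (in vec_space) nondistinct_rank_lt:
  assumes A: "A \<in> carrier_mat n nc" and nd: "\<not> distinct (cols A)"
  shows "rank A < nc"
proof -
  obtain S where S: "maximal S (\<lambda>T. T \<subseteq> set (cols A) \<and> lin_indpt T)"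
    using maximal_exists[of "(\<lambda>T. T \<subseteq> set (cols A) \<and> lin_indpt T)" "card (set (cols A))" "{}"]
    by (meson List.finite_set card_mono empty_iff empty_subsetI finite_lin_indpt2 rev_finite_subset)
  then have "card S \<le> card (set (cols A))" by (simp add: card_mono maximal_def)
  moreover have "card (set (cols A)) < nc"
    using A nd card_distinct card_length cols_length carrier_matD(2) nat_less_le by metis
  ultimately show ?thesis using rank_card_indpt[OF A S] by simp
qed

lemma (in vec_space) rank_lt_iff_kernel:
  assumes A: "A \<in> carrier_mat n nc"
  shows "rank A < nc \<longleftrightarrow> (\<exists>v\<in>carrier_vec nc. v \<noteq> 0\<^sub>v nc \<and> A *\<^sub>v v = 0\<^sub>v n)"
proof
  assume r: "rank A < nc"
  show "\<exists>v\<in>carrier_vec nc. v \<noteq> 0\<^sub>v nc \<and> A *\<^sub>v v = 0\<^sub>v n"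
  proof (cases "distinct (cols A)")
    case True
    have "\<not> lin_indpt (set (cols A))"
      using lin_indpt_full_rank[OF A True] r by auto
    then obtain v where "v \<in> carrier_vec nc" "v \<noteq> 0\<^sub>v nc" "A *\<^sub>v v = 0\<^sub>v n"
      using lin_depE[OF A _ True] by blast
    then show ?thesis by blast
  next
    case False
    then obtain i j where ij: "i \<noteq> j" "cols A ! i = cols A ! j" "i < length (cols A)" "j < length (cols A)"
      using distinct_conv_nth by blast
    then have c: "Matrix.col A i = Matrix.col A j" "i < nc" "j < nc" using A by auto
    define v :: "'a vec" where "v = unit_vec nc i - unit_vec nc j"
    have vc: "v \<in> carrier_vec nc" unfolding v_def by auto
    have "v $ i \<noteq> 0" unfolding v_def using c ij by simp
    then have "v \<noteq> 0\<^sub>v nc" using c by auto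
    moreover have "A *\<^sub>v v = 0\<^sub>v n"
    proof -
      have "A *\<^sub>v v = A *\<^sub>v unit_vec nc i - A *\<^sub>v unit_vec nc j"
        unfolding v_def using A by (simp add: mult_minus_distrib_mat_vec)
      also have "\<dots> = Matrix.col A i - Matrix.col A j" using A c by (simp add: mult_unit_vec_col)
      also have "\<dots> = 0\<^sub>v n" using c A by auto
      finally show ?thesis .
    qed
    ultimately show ?thesis using vc by blast
  qed
next
  assume "\<exists>v\<in>carrier_vec nc. v \<noteq> 0\<^sub>v nc \<and> A *\<^sub>v v = 0\<^sub>v n"
  then obtain v where v: "v \<in> carrier_vec nc" "v \<noteq> 0\<^sub>v nc" "A *\<^sub>v v = 0\<^sub>v n" by blast
  show "rank A < nc"
  proof (cases "distinct (cols A)")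
    case True
    have "lin_dep (set (cols A))" using lin_depI[OF A v True] .
    then have "rank A \<noteq> nc" using full_rank_lin_indpt[OF A _ True] by blast
    then show ?thesis using rank_le_nc[OF A] by auto
  next
    case False
    then show ?thesis using nondistinct_rank_lt[OF A] by blast
  qed
qed

lemma hcat_carrier:
  assumes "A \<in> carrier_mat n nc" "B \<in> carrier_mat n nc'"
  shows "hcat A B \<in> carrier_mat n (nc + nc')"
  using assms unfolding hcat_def by auto

lemma mem_cols: "x \<in> set (cols X) \<longleftrightarrow> (\<exists>j<dim_col X. x = Matrix.col X j)"
  by (auto simp: cols_def)

lemma set_cols_hcat:
  assumes A: "A \<in> carrier_mat n nc" and B: "B \<in> carrier_mat n nc'"
  shows "set (cols (hcat A B)) = set (cols A) \<union> set (cols B)"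
proof -
  have c1: "Matrix.col (hcat A B) j = Matrix.col A j" if "j < nc" for j
    using A B that by (intro eq_vecI) (auto simp: hcat_def Matrix.col_def)
  have c2: "Matrix.col (hcat A B) (nc + j) = Matrix.col B j" if "j < nc'" for j
    using A B that by (intro eq_vecI) (auto simp: hcat_def Matrix.col_def)
  have d: "dim_col (hcat A B) = nc + nc'" using hcat_carrier[OF A B] by auto
  have dA: "dim_col A = nc" and dB: "dim_col B = nc'" using A B by auto
  show ?thesis
  proof (rule Set.set_eqI)
    fix x
    show "x \<in> set (cols (hcat A B)) \<longleftrightarrow> x \<in> set (cols A) \<union> set (cols B)"
    proof
      assume "x \<in> set (cols (hcat A B))"
      then obtain j where j: "j < nc + nc'" "x = Matrix.col (hcat A B) j"
        unfolding mem_cols d by blast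
      show "x \<in> set (cols A) \<union> set (cols B)"
      proof (cases "j < nc")
        case True
        then have "x = Matrix.col A j" using j c1 by simp
        then show ?thesis using True unfolding Un_iff mem_cols dA by blast
      next
        case False
        then have e: "j = nc + (j - nc)" "j - nc < nc'" using j by auto
        then have "x = Matrix.col B (j - nc)" using j c2[of "j - nc"] by simp
        then show ?thesis using e unfolding Un_iff mem_cols dB by blast
      qed
    next
      assume "x \<in> set (cols A) \<union> set (cols B)"
      then show "x \<in> set (cols (hcat A B))"
      proof
        assume "x \<in> set (cols A)"
        then obtain j where j: "j < nc" "x = Matrix.col A j" unfolding mem_cols dA by blast
        then have "x = Matrix.col (hcat A B) j" using c1 by simp
        then show ?thesis unfolding mem_cols d using j(1) by (intro exI[of _ j]) auto
      next
        assume "x \<in> set (cols B)"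
        then obtain j where j: "j < nc'" "x = Matrix.col B j" unfolding mem_cols dB by blast
        then have "x = Matrix.col (hcat A B) (nc + j)" using c2 by simp
        then show ?thesis unfolding mem_cols d using j(1) by (intro exI[of _ "nc + j"]) auto
      qed
    qed
  qed
qed

lemma (in vec_space) rank_hcat_iff:
  assumes A: "A \<in> carrier_mat n nc" and B: "B \<in> carrier_mat n nc'"
  shows "rank (hcat A B) = rank A \<longleftrightarrow> set (cols B) \<subseteq> span (set (cols A))"
proof
  have cA: "set (cols A) \<subseteq> carrier_vec n" using A cols_dim by blast
  have cB: "set (cols B) \<subseteq> carrier_vec n" using B cols_dim by blast
  have H: "hcat A B \<in> carrier_mat n (nc + nc')" using hcat_carrier[OF A B] .
  assume r: "rank (hcat A B) = rank A"
  show "set (cols B) \<subseteq> span (set (cols A))"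
  proof (rule ccontr)
    assume "\<not> ?thesis"
    then obtain c where c: "c \<in> set (cols B)" "c \<notin> span (set (cols A))" by blast
    have cc: "c \<in> carrier_vec n" using c cB by blast
    obtain S where S: "maximal S (\<lambda>T. T \<subseteq> set (cols A) \<and> lin_indpt T)"
      using maximal_exists[of "(\<lambda>T. T \<subseteq> set (cols A) \<and> lin_indpt T)" "card (set (cols A))" "{}"]
      by (meson List.finite_set card_mono empty_iff empty_subsetI finite_lin_indpt2 rev_finite_subset)
    have SA: "S \<subseteq> set (cols A)" "lin_indpt S" using S by (auto simp: maximal_def)
    have fS: "finite S" using SA(1) finite_subset by blast
    have rS: "rank A = card S" using rank_card_indpt[OF A S] .
    have Sc: "S \<subseteq> carrier_vec n" using SA cA by blast
    have "span S \<subseteq> span (set (cols A))" using span_is_monotone[OF SA(1)] .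
    then have cS: "c \<notin> span S" using c by blast
    then have cS2: "c \<notin> S" using in_own_span[OF Sc] by blast
    have li: "lin_indpt (S \<union> {c})" using lin_dep_iff_in_span[OF Sc SA(2) cc cS2] cS by blast
    have sub: "S \<union> {c} \<subseteq> set (cols (hcat A B))" using set_cols_hcat[OF A B] SA c by blast
    have "card (S \<union> {c}) \<le> rank (hcat A B)" using rank_ge_card_indpt[OF H sub li] .
    moreover have "card (S \<union> {c}) = card S + 1" using fS cS2 by auto
    ultimately show False using r rS by auto
  qed
next
  have cA: "set (cols A) \<subseteq> carrier_vec n" using A cols_dim by blast
  have cB: "set (cols B) \<subseteq> carrier_vec n" using B cols_dim by blast
  assume s: "set (cols B) \<subseteq> span (set (cols A))"
  have "span (set (cols A) \<union> set (cols B)) = span (set (cols A))"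
  proof
    have "set (cols A) \<union> set (cols B) \<subseteq> span (set (cols A))"
      using in_own_span[OF cA] s by (rule Un_least)
    then show "span (set (cols A) \<union> set (cols B)) \<subseteq> span (set (cols A))"
      by (rule span_subsetI[OF cA])
    show "span (set (cols A)) \<subseteq> span (set (cols A) \<union> set (cols B))"
      by (rule span_is_monotone[OF Un_upper1])
  qed
  then show "rank (hcat A B) = rank A"
    by (simp only: rank_def set_cols_hcat[OF A B])
qed

lemma (in vec_space) span_cols_eq:
  assumes A: "A \<in> carrier_mat n nc"
  shows "span (set (cols A)) = {y. \<exists>x\<in>carrier_vec nc. y = A *\<^sub>v x}"
  using col_space_eq[OF A] A unfolding col_space_def by auto



definition Qf :: "nat \<Rightarrow> nat \<Rightarrow> (nat \<Rightarrow> real) \<Rightarrow> (nat \<Rightarrow> real) \<Rightarrow> (nat \<Rightarrow> nat \<Rightarrow> real) \<Rightarrow> real" where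
  "Qf P K h t x = (\<Sum>d<K. \<Sum>l<P. \<Sum>n<P. h (l*K+d) * t (n*K+d) * x d (l + n*P))"

lemma score_gen:
  fixes C :: "nat \<Rightarrow> nat \<Rightarrow> nat \<Rightarrow> real"
  shows "(\<Sum>l<P. \<Sum>m<P. \<Sum>n<P. C l m n * tri K (\<lambda>d. h (l*K+d)) (\<lambda>d. r (m*K+d)) (\<lambda>d. t (n*K+d)))
     = Qf P K h t (\<lambda>d i. \<Sum>m<P. C (i mod P) m (i div P) * r (m*K+d))"
proof -
  have "Qf P K h t (\<lambda>d i. \<Sum>m<P. C (i mod P) m (i div P) * r (m*K+d))
     = (\<Sum>d<K. \<Sum>l<P. \<Sum>n<P. \<Sum>m<P. C l m n * (h (l*K+d) * r (m*K+d) * t (n*K+d)))"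
    unfolding Qf_def
    by (intro sum.cong refl) (simp add: sum_distrib_left algebra_simps)
  also have "\<dots> = (\<Sum>l<P. \<Sum>d<K. \<Sum>n<P. \<Sum>m<P. C l m n * (h (l*K+d) * r (m*K+d) * t (n*K+d)))"
    by (rule sum.swap)
  also have "\<dots> = (\<Sum>l<P. \<Sum>n<P. \<Sum>d<K. \<Sum>m<P. C l m n * (h (l*K+d) * r (m*K+d) * t (n*K+d)))"
    by (intro sum.cong refl sum.swap)
  also have "\<dots> = (\<Sum>l<P. \<Sum>n<P. \<Sum>m<P. \<Sum>d<K. C l m n * (h (l*K+d) * r (m*K+d) * t (n*K+d)))"
    by (intro sum.cong refl sum.swap)
  also have "\<dots> = (\<Sum>l<P. \<Sum>m<P. \<Sum>n<P. \<Sum>d<K. C l m n * (h (l*K+d) * r (m*K+d) * t (n*K+d)))"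
    by (intro sum.cong refl sum.swap)
  also have "\<dots> = (\<Sum>l<P. \<Sum>m<P. \<Sum>n<P. C l m n * tri K (\<lambda>d. h (l*K+d)) (\<lambda>d. r (m*K+d)) (\<lambda>d. t (n*K+d)))"
    unfolding tri_def by (simp add: sum_distrib_left)
  finally show ?thesis by simp
qed

lemma score_Q:
  "score P D W h r t = Qf P (D div P) h t (\<lambda>d i. \<Sum>m<P. W (i mod P) m (i div P) * r (m*(D div P)+d))"
proof -
  have "score P D W h r t = (\<Sum>l<P. \<Sum>m<P. \<Sum>n<P. W l m n * tri (D div P) (\<lambda>d. h (l*(D div P)+d)) (\<lambda>d. r (m*(D div P)+d)) (\<lambda>d. t (n*(D div P)+d)))"
    unfolding score_def col_def by simp
  also have "\<dots> = Qf P (D div P) h t (\<lambda>d i. \<Sum>m<P. W (i mod P) m (i div P) * r (m*(D div P)+d))"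
    by (rule score_gen)
  finally show ?thesis .
qed

lemma score_Q_swap:
  "score P D W t r h = Qf P (D div P) h t (\<lambda>d i. \<Sum>m<P. W (i div P) m (i mod P) * r (m*(D div P)+d))"
proof -
  let ?K = "D div P"
  have "score P D W t r h = (\<Sum>l<P. \<Sum>m<P. \<Sum>n<P. W l m n * tri ?K (\<lambda>d. t (l*?K+d)) (\<lambda>d. r (m*?K+d)) (\<lambda>d. h (n*?K+d)))"
    unfolding score_def col_def by simp
  also have "\<dots> = (\<Sum>m<P. \<Sum>l<P. \<Sum>n<P. W l m n * tri ?K (\<lambda>d. t (l*?K+d)) (\<lambda>d. r (m*?K+d)) (\<lambda>d. h (n*?K+d)))"
    by (rule sum.swap)
  also have "\<dots> = (\<Sum>m<P. \<Sum>n<P. \<Sum>l<P. W l m n * tri ?K (\<lambda>d. t (l*?K+d)) (\<lambda>d. r (m*?K+d)) (\<lambda>d. h (n*?K+d)))"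
    by (intro sum.cong refl sum.swap)
  also have "\<dots> = (\<Sum>n<P. \<Sum>m<P. \<Sum>l<P. W l m n * tri ?K (\<lambda>d. t (l*?K+d)) (\<lambda>d. r (m*?K+d)) (\<lambda>d. h (n*?K+d)))"
    by (rule sum.swap)
  also have "\<dots> = (\<Sum>n<P. \<Sum>m<P. \<Sum>l<P. W l m n * tri ?K (\<lambda>d. h (n*?K+d)) (\<lambda>d. r (m*?K+d)) (\<lambda>d. t (l*?K+d)))"
    unfolding tri_def by (intro sum.cong refl) (simp add: mult.commute mult.left_commute)
  also have "\<dots> = Qf P ?K h t (\<lambda>d i. \<Sum>m<P. W (i div P) m (i mod P) * r (m*?K+d))"
    by (rule score_gen)
  finally show ?thesis .
qed

lemma Qf_neg: "Qf P K h t (\<lambda>d i. - y d i) = - Qf P K h t y"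
  unfolding Qf_def by (simp add: sum_negf)

lemma Qf_diff: "Qf P K h t x - Qf P K h t y = Qf P K h t (\<lambda>d i. x d i - y d i)"
  unfolding Qf_def by (simp add: sum_subtractf algebra_simps)

lemma idx_inj:
  fixes K :: nat
  assumes "d < K" "d' < K"
  shows "(l' * K + d' = l * K + d) \<longleftrightarrow> (l' = l \<and> d' = d)"
proof
  assume e: "l' * K + d' = l * K + d"
  have "(l' * K + d') div K = l'" "(l' * K + d') mod K = d'" using assms by auto
  moreover have "(l * K + d) div K = l" "(l * K + d) mod K = d" using assms by auto
  ultimately show "l' = l \<and> d' = d" using e by metis
qed auto

lemma Qf_point:
  assumes d: "d < K" and l: "l < P" and n: "n < P"
  shows "Qf P K (\<lambda>j. if j = l*K+d then 1 else 0) (\<lambda>j. if j = n*K+d then 1 else 0) x = x d (l + n*P)"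
proof -
  have "Qf P K (\<lambda>j. if j = l*K+d then 1 else 0) (\<lambda>j. if j = n*K+d then 1 else 0) x
     = (\<Sum>d'<K. \<Sum>l'<P. \<Sum>n'<P. if n' = n then (if l' = l then (if d' = d then x d' (l' + n'*P) else 0) else 0) else 0)"
    unfolding Qf_def
    by (intro sum.cong refl) (auto simp: idx_inj[OF d])
  also have "\<dots> = x d (l + n*P)" using d l n by simp
  finally show ?thesis .
qed

lemma Qf_eq_iff:
  "(\<forall>h t. Qf P K h t x = Qf P K h t y) \<longleftrightarrow> (\<forall>d<K. \<forall>i<P*P. x d i = y d i)"
proof
  assume a: "\<forall>h t. Qf P K h t x = Qf P K h t y"
  show "\<forall>d<K. \<forall>i<P*P. x d i = y d i"
  proof (intro allI impI)
    fix d i assume d: "d < K" and i: "i < P*P"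
    have P: "P > 0" using i by (cases P) auto
    have l: "i mod P < P" and n: "i div P < P" using P i by (auto simp: less_mult_imp_div_less)
    have ii: "i = i mod P + i div P * P" by simp
    show "x d i = y d i"
      using a Qf_point[OF d l n, of x] Qf_point[OF d l n, of y] ii by metis
  qed
next
  assume "\<forall>d<K. \<forall>i<P*P. x d i = y d i"
  moreover have "l + n*P < P*P" if "l < P" "n < P" for l n
  proof -
    have "l + n*P < P + n*P" using that by simp
    also have "\<dots> = (n+1)*P" by simp
    also have "\<dots> \<le> P*P" using that by (intro mult_le_mono1) simp
    finally show ?thesis .
  qed
  ultimately have "\<forall>d<K. \<forall>l<P. \<forall>n<P. x d (l + n*P) = y d (l + n*P)"
    by blast
  then show "\<forall>h t. Qf P K h t x = Qf P K h t y"
    unfolding Qf_def by simp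
qed

definition rv :: "nat \<Rightarrow> nat \<Rightarrow> (nat \<Rightarrow> real) \<Rightarrow> nat \<Rightarrow> real vec" where
  "rv P K r d = vec P (\<lambda>m. r (m*K+d))"

lemma rv_index[simp]: "i < P \<Longrightarrow> rv P K r d $ i = r (i*K+d)" and rv_dim[simp]: "dim_vec (rv P K r d) = P"
  unfolding rv_def by simp_all

lemma rv_carrier[simp]: "rv P K r d \<in> carrier_vec P"
  unfolding rv_def by simp

lemma W2T_carrier[simp]: "W2T P W \<in> carrier_mat (P*P) P"
  unfolding W2T_def by simp

lemma Sperm_carrier[simp]: "Sperm P \<in> carrier_mat (P*P) (P*P)"
  unfolding Sperm_def by simp

lemma dim_Sperm[simp]: "dim_row (Sperm P) = P*P" "dim_col (Sperm P) = P*P"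
  unfolding Sperm_def by simp_all

lemma lt_sq: fixes l n P :: nat assumes "l < P" "n < P" shows "l + n*P < P*P"
proof -
  have "l + n*P < P + n*P" using assms by simp
  also have "\<dots> = (n+1)*P" by simp
  also have "\<dots> \<le> P*P" using assms by (intro mult_le_mono1) simp
  finally show ?thesis .
qed

lemma divmod_lt: fixes i P :: nat assumes "i < P*P" shows "i mod P < P" "i div P < P"
proof -
  have P: "P > 0" using assms by (cases P) auto
  show "i mod P < P" using P by simp
  show "i div P < P" using assms by (simp add: less_mult_imp_div_less)
qed

definition swp :: "nat \<Rightarrow> nat \<Rightarrow> nat" where "swp P a = (a mod P)*P + a div P"

lemma swp_lt: "a < P*P \<Longrightarrow> swp P a < P*P"
  unfolding swp_def using divmod_lt[of a P] lt_sq[of "a div P" P "a mod P"] by simp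

lemma swp_mod_div: assumes "a < P*P" shows "swp P a mod P = a div P" "swp P a div P = a mod P"
  using divmod_lt[OF assms] unfolding swp_def by auto

lemma swp_swp: "a < P*P \<Longrightarrow> swp P (swp P a) = a"
  using swp_mod_div[of a P] unfolding swp_def[of P "swp P a"] by (simp add: add.commute)

lemma Sperm_entry:
  assumes a: "a < P*P"
  shows "(\<exists>i<P. \<exists>j<P. a = i * P + j \<and> b = j * P + i) \<longleftrightarrow> b = swp P a"
proof
  assume "\<exists>i<P. \<exists>j<P. a = i * P + j \<and> b = j * P + i"
  then obtain i j where ij: "i < P" "j < P" "a = i * P + j" "b = j * P + i" by blast
  then have "a mod P = j" "a div P = i" by auto
  then show "b = swp P a" using ij unfolding swp_def by simp
next
  assume "b = swp P a"
  then show "\<exists>i<P. \<exists>j<P. a = i * P + j \<and> b = j * P + i"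
    using divmod_lt[OF a] unfolding swp_def
    by (intro exI[of _ "a div P"] conjI exI[of _ "a mod P"]) auto
qed

lemma Sperm_mult:
  assumes x: "x \<in> carrier_vec (P*P)" and a: "a < P*P"
  shows "(Sperm P *\<^sub>v x) $ a = x $ swp P a"
proof -
  have "(Sperm P *\<^sub>v x) $ a = (\<Sum>b\<in>{0..<P*P}. Sperm P $$ (a, b) * x $ b)"
    using a x by (simp add: scalar_prod_def row_def)
  also have "\<dots> = (\<Sum>b\<in>{0..<P*P}. (if b = swp P a then x $ b else 0))"
    using a by (intro sum.cong refl) (simp add: Sperm_def Sperm_entry[OF a])
  also have "\<dots> = x $ swp P a" using swp_lt[OF a] by simp
  finally show ?thesis .
qed

lemma Sperm_invol:
  assumes y: "y \<in> carrier_vec (P*P)"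
  shows "Sperm P *\<^sub>v (Sperm P *\<^sub>v y) = y"
proof (rule eq_vecI)
  show "dim_vec (Sperm P *\<^sub>v (Sperm P *\<^sub>v y)) = dim_vec y" using y by (simp add: Sperm_def)
  fix a assume "a < dim_vec y"
  then have a: "a < P*P" using y by simp
  have "Sperm P *\<^sub>v y \<in> carrier_vec (P*P)" by (rule mult_mat_vec_carrier[OF Sperm_carrier y])
  then show "(Sperm P *\<^sub>v (Sperm P *\<^sub>v y)) $ a = y $ a"
    using Sperm_mult[OF _ a] Sperm_mult[OF y swp_lt[OF a]] swp_swp[OF a] by simp
qed

lemma W2T_mult:
  assumes i: "i < P*P"
  shows "(W2T P W *\<^sub>v rv P K r d) $ i = (\<Sum>m<P. W (i mod P) m (i div P) * r (m*K+d))"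
  using i unfolding W2T_def rv_def
  by (simp add: scalar_prod_def lessThan_atLeast0)

lemma SW2T_mult:
  assumes i: "i < P*P"
  shows "((Sperm P * W2T P W) *\<^sub>v rv P K r d) $ i = (\<Sum>m<P. W (i div P) m (i mod P) * r (m*K+d))"
proof -
  have "((Sperm P * W2T P W) *\<^sub>v rv P K r d) = Sperm P *\<^sub>v (W2T P W *\<^sub>v rv P K r d)"
    by (rule assoc_mult_mat_vec[of _ "P*P" "P*P" _ P]) auto
  moreover have "W2T P W *\<^sub>v rv P K r d \<in> carrier_vec (P*P)"
    by (rule mult_mat_vec_carrier[OF W2T_carrier rv_carrier])
  ultimately show ?thesis
    using Sperm_mult[OF _ i, of "W2T P W *\<^sub>v rv P K r d"] W2T_mult[OF swp_lt[OF i]] swp_mod_div[OF i]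
    by simp
qed


lemma vec_eq0_iff:
  fixes u w :: "real vec"
  assumes "u \<in> carrier_vec n" "w \<in> carrier_vec n"
  shows "(u - w = 0\<^sub>v n) \<longleftrightarrow> (\<forall>i<n. u $ i = w $ i)"
proof
  assume "u - w = 0\<^sub>v n"
  then have "\<forall>i<n. (u - w) $ i = 0" by simp
  then show "\<forall>i<n. u $ i = w $ i" using assms by auto
next
  assume "\<forall>i<n. u $ i = w $ i"
  then show "u - w = 0\<^sub>v n" using assms by (intro eq_vecI) auto
qed

lemma vec_add0_iff:
  fixes u w :: "real vec"
  assumes "u \<in> carrier_vec n" "w \<in> carrier_vec n"
  shows "(u + w = 0\<^sub>v n) \<longleftrightarrow> (\<forall>i<n. u $ i = - (w $ i))"
proof
  assume "u + w = 0\<^sub>v n"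
  then have "\<forall>i<n. (u + w) $ i = 0" by simp
  then show "\<forall>i<n. u $ i = - (w $ i)" using assms by (auto simp: eq_neg_iff_add_eq_0)
next
  assume "\<forall>i<n. u $ i = - (w $ i)"
  then show "u + w = 0\<^sub>v n" using assms by (intro eq_vecI) auto
qed

lemma ker_bridge:
  fixes M :: "real mat"
  assumes M: "M \<in> carrier_mat (P*P) P" and K: "K > 0" and D: "D = P * K"
  shows "(\<exists>r. (\<exists>d<D. r d \<noteq> 0) \<and> (\<forall>d<K. M *\<^sub>v rv P K r d = 0\<^sub>v (P*P)))
     \<longleftrightarrow> (\<exists>v\<in>carrier_vec P. v \<noteq> 0\<^sub>v P \<and> M *\<^sub>v v = 0\<^sub>v (P*P))"
proof
  assume "\<exists>r. (\<exists>d<D. r d \<noteq> 0) \<and> (\<forall>d<K. M *\<^sub>v rv P K r d = 0\<^sub>v (P*P))"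
  then obtain r d0 where r: "d0 < D" "r d0 \<noteq> 0" "\<forall>d<K. M *\<^sub>v rv P K r d = 0\<^sub>v (P*P)" by blast
  have m0: "d0 div K < P" using r(1) D K by (simp add: less_mult_imp_div_less mult.commute)
  have d1: "d0 mod K < K" using K by simp
  have e: "rv P K r (d0 mod K) $ (d0 div K) = r d0"
    using m0 by simp
  have "rv P K r (d0 mod K) \<noteq> 0\<^sub>v P"
  proof
    assume "rv P K r (d0 mod K) = 0\<^sub>v P"
    then have "rv P K r (d0 mod K) $ (d0 div K) = 0" using m0 by simp
    then show False using e r(2) by simp
  qed
  then show "\<exists>v\<in>carrier_vec P. v \<noteq> 0\<^sub>v P \<and> M *\<^sub>v v = 0\<^sub>v (P*P)"
    using r(3) d1 rv_carrier by blast
next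
  assume "\<exists>v\<in>carrier_vec P. v \<noteq> 0\<^sub>v P \<and> M *\<^sub>v v = 0\<^sub>v (P*P)"
  then obtain v where v: "v \<in> carrier_vec P" "v \<noteq> 0\<^sub>v P" "M *\<^sub>v v = 0\<^sub>v (P*P)" by blast
  define r where "r j = (if j div K < P then v $ (j div K) else 0)" for j
  have rvv: "rv P K r d = v" if "d < K" for d
    using v(1) that K unfolding rv_def r_def by (intro eq_vecI) auto
  obtain m where m: "m < P" "v $ m \<noteq> 0" using v(1,2) by (metis eq_vecI carrier_vecD index_zero_vec)
  have "m * K < D" using m(1) D K by simp
  moreover have "r (m * K) \<noteq> 0" using m K unfolding r_def by simp
  ultimately show "\<exists>r. (\<exists>d<D. r d \<noteq> 0) \<and> (\<forall>d<K. M *\<^sub>v rv P K r d = 0\<^sub>v (P*P))"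
    using rvv v(3) by blast
qed

lemma c_bridge:
  fixes A B :: "real mat"
  assumes K: "K > 0"
  shows "(\<forall>r1. \<exists>r2. \<forall>d<K. A *\<^sub>v rv P K r1 d = B *\<^sub>v rv P K r2 d)
     \<longleftrightarrow> (\<forall>v\<in>carrier_vec P. \<exists>w\<in>carrier_vec P. A *\<^sub>v v = B *\<^sub>v w)"
proof
  assume a: "\<forall>r1. \<exists>r2. \<forall>d<K. A *\<^sub>v rv P K r1 d = B *\<^sub>v rv P K r2 d"
  show "\<forall>v\<in>carrier_vec P. \<exists>w\<in>carrier_vec P. A *\<^sub>v v = B *\<^sub>v w"
  proof
    fix v :: "real vec" assume v: "v \<in> carrier_vec P"
    define r where "r j = (if j div K < P then v $ (j div K) else 0)" for j
    have rvv: "rv P K r 0 = v"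
      using v K unfolding rv_def r_def by (intro eq_vecI) auto
    obtain r2 where "\<forall>d<K. A *\<^sub>v rv P K r d = B *\<^sub>v rv P K r2 d" using a by blast
    then have "A *\<^sub>v v = B *\<^sub>v rv P K r2 0" using K rvv by metis
    then show "\<exists>w\<in>carrier_vec P. A *\<^sub>v v = B *\<^sub>v w" using rv_carrier by blast
  qed
next
  assume "\<forall>v\<in>carrier_vec P. \<exists>w\<in>carrier_vec P. A *\<^sub>v v = B *\<^sub>v w"
  then obtain f where f: "\<And>v. v \<in> carrier_vec P \<Longrightarrow> f v \<in> carrier_vec P \<and> A *\<^sub>v v = B *\<^sub>v f v"
    by metis
  show "\<forall>r1. \<exists>r2. \<forall>d<K. A *\<^sub>v rv P K r1 d = B *\<^sub>v rv P K r2 d"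
  proof
    fix r1
    define r2 where "r2 j = f (rv P K r1 (j mod K)) $ (j div K)" for j
    have "rv P K r2 d = f (rv P K r1 d)" if d: "d < K" for d
    proof -
      have fc: "f (rv P K r1 d) \<in> carrier_vec P" using f rv_carrier by blast
      show ?thesis using fc d by (intro eq_vecI) (auto simp: r2_def)
    qed
    then show "\<exists>r2. \<forall>d<K. A *\<^sub>v rv P K r1 d = B *\<^sub>v rv P K r2 d"
      using f rv_carrier by metis
  qed
qed

theorem theorem1:
  fixes P D :: nat and W :: "nat \<Rightarrow> nat \<Rightarrow> nat \<Rightarrow> real"
  assumes "P > 0" and "D > 0" and "P dvd D"
  shows "((\<exists>r :: nat \<Rightarrow> real. (\<exists>d<D. r d \<noteq> 0) \<and>
              (\<forall>h t. score P D W h r t = score P D W t r h))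
           \<longleftrightarrow> mrank (W2T P W - Sperm P * W2T P W) < P)
       \<and> ((\<exists>r :: nat \<Rightarrow> real. (\<exists>d<D. r d \<noteq> 0) \<and>
              (\<forall>h t. score P D W h r t = - score P D W t r h))
           \<longleftrightarrow> mrank (W2T P W + Sperm P * W2T P W) < P)
       \<and> ((\<forall>r1 :: nat \<Rightarrow> real. \<exists>r2 :: nat \<Rightarrow> real.
              \<forall>h t. score P D W h r1 t = score P D W t r2 h)
           \<longleftrightarrow> mrank (W2T P W) = mrank (hcat (W2T P W) (Sperm P * W2T P W)))"
proof -
  define K where "K = D div P"
  define A where "A = W2T P W"
  define SA where "SA = Sperm P * W2T P W"
  have D: "D = P * K" using assms(3) unfolding K_def by simp
  have K: "K > 0" using D assms(2) by (cases K) auto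
  have Ac: "A \<in> carrier_mat (P*P) P" unfolding A_def by simp
  have SAc: "SA \<in> carrier_mat (P*P) P" unfolding SA_def
    by (rule mult_carrier_mat[OF Sperm_carrier W2T_carrier])
  interpret V: vec_space "TYPE(real)" "P*P" .
  have mr: "mrank M = V.rank M" if "M \<in> carrier_mat (P*P) n" for M n
    using that unfolding mrank_def by simp
  have Av: "(A *\<^sub>v rv P K r d) $ i = (\<Sum>m<P. W (i mod P) m (i div P) * r (m*K+d))" if "i < P*P" for r d i
    unfolding A_def using W2T_mult[OF that] .
  have SAv: "(SA *\<^sub>v rv P K r d) $ i = (\<Sum>m<P. W (i div P) m (i mod P) * r (m*K+d))" if "i < P*P" for r d i
    unfolding SA_def using SW2T_mult[OF that] .
  have Avc: "A *\<^sub>v rv P K r d \<in> carrier_vec (P*P)" for r d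
    by (rule mult_mat_vec_carrier[OF Ac rv_carrier])
  have SAvc: "SA *\<^sub>v rv P K r d \<in> carrier_vec (P*P)" for r d
    by (rule mult_mat_vec_carrier[OF SAc rv_carrier])
  have sc1: "score P D W h r t = Qf P K h t (\<lambda>d i. (A *\<^sub>v rv P K r d) $ i)" for h r t
  proof -
    have "score P D W h r t = Qf P K h t (\<lambda>d i. \<Sum>m<P. W (i mod P) m (i div P) * r (m*K+d))"
      unfolding K_def by (rule score_Q)
    also have "\<dots> = Qf P K h t (\<lambda>d i. (A *\<^sub>v rv P K r d) $ i)"
      unfolding Qf_def
      by (intro sum.cong refl) (simp add: Av lt_sq)
    finally show ?thesis .
  qed
  have sc2: "score P D W t r h = Qf P K h t (\<lambda>d i. (SA *\<^sub>v rv P K r d) $ i)" for h r t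
  proof -
    have "score P D W t r h = Qf P K h t (\<lambda>d i. \<Sum>m<P. W (i div P) m (i mod P) * r (m*K+d))"
      unfolding K_def by (rule score_Q_swap)
    also have "\<dots> = Qf P K h t (\<lambda>d i. (SA *\<^sub>v rv P K r d) $ i)"
      unfolding Qf_def
      by (intro sum.cong refl) (simp add: SAv lt_sq)
    finally show ?thesis .
  qed
  have eqs: "(\<forall>h t. score P D W h r1 t = score P D W t r2 h)
      \<longleftrightarrow> (\<forall>d<K. A *\<^sub>v rv P K r1 d = SA *\<^sub>v rv P K r2 d)" for r1 r2
  proof -
    have "(\<forall>h t. score P D W h r1 t = score P D W t r2 h)
       \<longleftrightarrow> (\<forall>h t. Qf P K h t (\<lambda>d i. (A *\<^sub>v rv P K r1 d) $ i) = Qf P K h t (\<lambda>d i. (SA *\<^sub>v rv P K r2 d) $ i))"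
      using sc1 sc2 by metis
    also have "\<dots> \<longleftrightarrow> (\<forall>d<K. \<forall>i<P*P. (A *\<^sub>v rv P K r1 d) $ i = (SA *\<^sub>v rv P K r2 d) $ i)"
      by (rule Qf_eq_iff)
    also have "\<dots> \<longleftrightarrow> (\<forall>d<K. A *\<^sub>v rv P K r1 d = SA *\<^sub>v rv P K r2 d)"
      using vec_eq0_iff[OF Avc SAvc] by (metis Avc SAvc carrier_vecD eq_vecI)
    finally show ?thesis .
  qed
  have partA: "(\<exists>r. (\<exists>d<D. r d \<noteq> 0) \<and> (\<forall>h t. score P D W h r t = score P D W t r h))
      \<longleftrightarrow> mrank (A - SA) < P"
  proof -
    have AmS: "A - SA \<in> carrier_mat (P*P) P" by (rule minus_carrier_mat[OF SAc])
    have "(\<forall>h t. score P D W h r t = score P D W t r h)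
       \<longleftrightarrow> (\<forall>d<K. (A - SA) *\<^sub>v rv P K r d = 0\<^sub>v (P*P))" for r
    proof -
      have "(\<forall>h t. score P D W h r t = score P D W t r h)
         \<longleftrightarrow> (\<forall>h t. Qf P K h t (\<lambda>d i. (A *\<^sub>v rv P K r d) $ i) = Qf P K h t (\<lambda>d i. (SA *\<^sub>v rv P K r d) $ i))"
        using sc1 sc2 by metis
      also have "\<dots> \<longleftrightarrow> (\<forall>d<K. \<forall>i<P*P. (A *\<^sub>v rv P K r d) $ i = (SA *\<^sub>v rv P K r d) $ i)"
        by (rule Qf_eq_iff)
      also have "\<dots> \<longleftrightarrow> (\<forall>d<K. (A - SA) *\<^sub>v rv P K r d = 0\<^sub>v (P*P))"
        using vec_eq0_iff[OF Avc SAvc] minus_mult_distrib_mat_vec[OF Ac SAc rv_carrier] by simp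
      finally show ?thesis .
    qed
    then have "(\<exists>r. (\<exists>d<D. r d \<noteq> 0) \<and> (\<forall>h t. score P D W h r t = score P D W t r h))
      \<longleftrightarrow> (\<exists>r. (\<exists>d<D. r d \<noteq> 0) \<and> (\<forall>d<K. (A - SA) *\<^sub>v rv P K r d = 0\<^sub>v (P*P)))" by simp
    also have "\<dots> \<longleftrightarrow> (\<exists>v\<in>carrier_vec P. v \<noteq> 0\<^sub>v P \<and> (A - SA) *\<^sub>v v = 0\<^sub>v (P*P))"
      by (rule ker_bridge[OF AmS K D])
    also have "\<dots> \<longleftrightarrow> mrank (A - SA) < P"
      unfolding mr[OF AmS] using V.rank_lt_iff_kernel[OF AmS] by simp
    finally show ?thesis .
  qed
  have partB: "(\<exists>r. (\<exists>d<D. r d \<noteq> 0) \<and> (\<forall>h t. score P D W h r t = - score P D W t r h))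
      \<longleftrightarrow> mrank (A + SA) < P"
  proof -
    have ApS: "A + SA \<in> carrier_mat (P*P) P" by (rule add_carrier_mat[OF SAc])
    have "(\<forall>h t. score P D W h r t = - score P D W t r h)
       \<longleftrightarrow> (\<forall>d<K. (A + SA) *\<^sub>v rv P K r d = 0\<^sub>v (P*P))" for r
    proof -
      have "(\<forall>h t. score P D W h r t = - score P D W t r h)
         \<longleftrightarrow> (\<forall>h t. Qf P K h t (\<lambda>d i. (A *\<^sub>v rv P K r d) $ i) = Qf P K h t (\<lambda>d i. - (SA *\<^sub>v rv P K r d) $ i))"
        using sc1 sc2 Qf_neg by metis
      also have "\<dots> \<longleftrightarrow> (\<forall>d<K. \<forall>i<P*P. (A *\<^sub>v rv P K r d) $ i = - (SA *\<^sub>v rv P K r d) $ i)"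
        by (rule Qf_eq_iff)
      also have "\<dots> \<longleftrightarrow> (\<forall>d<K. (A + SA) *\<^sub>v rv P K r d = 0\<^sub>v (P*P))"
        using vec_add0_iff[OF Avc SAvc] add_mult_distrib_mat_vec[OF Ac SAc rv_carrier] by simp
      finally show ?thesis .
    qed
    then have "(\<exists>r. (\<exists>d<D. r d \<noteq> 0) \<and> (\<forall>h t. score P D W h r t = - score P D W t r h))
      \<longleftrightarrow> (\<exists>r. (\<exists>d<D. r d \<noteq> 0) \<and> (\<forall>d<K. (A + SA) *\<^sub>v rv P K r d = 0\<^sub>v (P*P)))" by simp
    also have "\<dots> \<longleftrightarrow> (\<exists>v\<in>carrier_vec P. v \<noteq> 0\<^sub>v P \<and> (A + SA) *\<^sub>v v = 0\<^sub>v (P*P))"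
      by (rule ker_bridge[OF ApS K D])
    also have "\<dots> \<longleftrightarrow> mrank (A + SA) < P"
      unfolding mr[OF ApS] using V.rank_lt_iff_kernel[OF ApS] by simp
    finally show ?thesis .
  qed
  have SAassoc: "SA *\<^sub>v x = Sperm P *\<^sub>v (A *\<^sub>v x)" if "x \<in> carrier_vec P" for x
    unfolding SA_def A_def using that by (intro assoc_mult_mat_vec[of _ "P*P" "P*P" _ P]) auto
  have partC: "(\<forall>r1. \<exists>r2. \<forall>h t. score P D W h r1 t = score P D W t r2 h)
      \<longleftrightarrow> mrank A = mrank (hcat A SA)"
  proof -
    have "(\<forall>r1. \<exists>r2. \<forall>h t. score P D W h r1 t = score P D W t r2 h)
       \<longleftrightarrow> (\<forall>r1. \<exists>r2. \<forall>d<K. A *\<^sub>v rv P K r1 d = SA *\<^sub>v rv P K r2 d)"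
      using eqs by simp
    also have "\<dots> \<longleftrightarrow> (\<forall>v\<in>carrier_vec P. \<exists>w\<in>carrier_vec P. A *\<^sub>v v = SA *\<^sub>v w)"
      by (rule c_bridge[OF K])
    also have "\<dots> \<longleftrightarrow> (\<forall>w\<in>carrier_vec P. \<exists>v\<in>carrier_vec P. SA *\<^sub>v w = A *\<^sub>v v)"
    proof
      assume a: "\<forall>v\<in>carrier_vec P. \<exists>w\<in>carrier_vec P. A *\<^sub>v v = SA *\<^sub>v w"
      show "\<forall>w\<in>carrier_vec P. \<exists>v\<in>carrier_vec P. SA *\<^sub>v w = A *\<^sub>v v"
      proof
        fix w :: "real vec" assume w: "w \<in> carrier_vec P"
        obtain v where v: "v \<in> carrier_vec P" "A *\<^sub>v w = SA *\<^sub>v v" using a w by blast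
        have "SA *\<^sub>v w = Sperm P *\<^sub>v (SA *\<^sub>v v)" using SAassoc[OF w] v by simp
        also have "\<dots> = A *\<^sub>v v" using SAassoc[OF v(1)] Sperm_invol[OF mult_mat_vec_carrier[OF Ac v(1)]] by simp
        finally show "\<exists>v\<in>carrier_vec P. SA *\<^sub>v w = A *\<^sub>v v" using v(1) by blast
      qed
    next
      assume a: "\<forall>w\<in>carrier_vec P. \<exists>v\<in>carrier_vec P. SA *\<^sub>v w = A *\<^sub>v v"
      show "\<forall>v\<in>carrier_vec P. \<exists>w\<in>carrier_vec P. A *\<^sub>v v = SA *\<^sub>v w"
      proof
        fix v :: "real vec" assume v: "v \<in> carrier_vec P"
        obtain w where w: "w \<in> carrier_vec P" "SA *\<^sub>v v = A *\<^sub>v w" using a v by blast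
        have "A *\<^sub>v v = Sperm P *\<^sub>v (SA *\<^sub>v v)"
          using SAassoc[OF v] Sperm_invol[OF mult_mat_vec_carrier[OF Ac v]] by simp
        also have "\<dots> = SA *\<^sub>v w" using w SAassoc[OF w(1)] by simp
        finally show "\<exists>w\<in>carrier_vec P. A *\<^sub>v v = SA *\<^sub>v w" using w(1) by blast
      qed
    qed
    also have "\<dots> \<longleftrightarrow> set (cols SA) \<subseteq> V.span (set (cols A))"
    proof
      assume a: "\<forall>w\<in>carrier_vec P. \<exists>v\<in>carrier_vec P. SA *\<^sub>v w = A *\<^sub>v v"
      show "set (cols SA) \<subseteq> V.span (set (cols A))"
      proof
        fix x assume "x \<in> set (cols SA)"
        then obtain j where j: "j < P" "x = Matrix.col SA j" using SAc unfolding mem_cols by auto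
        then have "x = SA *\<^sub>v unit_vec P j" using mult_unit_vec_col[OF SAc] by simp
        then obtain v where "v \<in> carrier_vec P" "x = A *\<^sub>v v" using a unit_vec_carrier by metis
        then show "x \<in> V.span (set (cols A))" unfolding V.span_cols_eq[OF Ac] by blast
      qed
    next
      assume a: "set (cols SA) \<subseteq> V.span (set (cols A))"
      have cA: "set (cols A) \<subseteq> carrier_vec (P*P)" using cols_dim[of A] Ac by auto
      have sub: "V.span (set (cols SA)) \<subseteq> V.span (set (cols A))"
        by (rule V.span_subsetI[OF cA a])
      show "\<forall>w\<in>carrier_vec P. \<exists>v\<in>carrier_vec P. SA *\<^sub>v w = A *\<^sub>v v"
      proof
        fix w :: "real vec" assume w: "w \<in> carrier_vec P"
        have "SA *\<^sub>v w \<in> V.span (set (cols SA))" unfolding V.span_cols_eq[OF SAc] using w by blast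
        then have "SA *\<^sub>v w \<in> V.span (set (cols A))" using sub by blast
        then show "\<exists>v\<in>carrier_vec P. SA *\<^sub>v w = A *\<^sub>v v" unfolding V.span_cols_eq[OF Ac] by blast
      qed
    qed
    also have "\<dots> \<longleftrightarrow> V.rank (hcat A SA) = V.rank A"
      using V.rank_hcat_iff[OF Ac SAc] by simp
    also have "\<dots> \<longleftrightarrow> mrank A = mrank (hcat A SA)"
      using mr[OF Ac] mr[OF hcat_carrier[OF Ac SAc]] by auto
    finally show ?thesis .
  qed
  show ?thesis using partA partB partC unfolding A_def SA_def by blast
qed

end
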